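(* Fix $\alpha\ge0$. For $\beta>0$ let $f_\beta$, $c_{0,\beta}$, $b_{0,\beta}$, $p_\beta$ and $F_\beta$ be as in the context. Then for every $\sigma\in\mathbb{C}$ with $\Re(\sigma)>0$, $$\lim_{\beta\to0^+}F_\beta(\sigma)=\left(\frac{\alpha\sigma}{2}+\frac14\right)e^{-2\sigma}-\frac12 .$$ Consequently the limiting (square-wave) dispersion relation $\lim_{\beta\to0^+}F_\beta(\sigma)=0$ is equivalent to $e^{2\sigma}=\alpha\sigma+\frac12$.
   Context: Dimensionless Chapman–Jouguet example: for parameters $\alpha\ge0$, $\beta>0$, define for $x\le0$, $u>0$ $$f_\beta(x,u)=\frac{1}{4\left(1+\mathrm{Erf}\!\left[\frac{u^{-\alpha}}{2\sqrt\beta}\right]\right)}\,\frac{1}{\sqrt{4\pi\beta}}\exp\!\left[-\frac{(x+u^{-\alpha})^2}{4\beta}\right],$$ which satisfies $\int_{-\infty}^0 f_\beta(x,u)\,dx=1/8$ for all $u$; the steady shock value is $u_{0s}=1$. Define $c_{0,\beta}(x)=\sqrt{2\int_{-\infty}^x f_\beta(y,1)\,dy}$ (so $c_{0,\beta}(0)=1/2$), $b_{0,\beta}(x)=\frac{\partial f_\beta}{\partial u}(x,1)+\frac{f_\beta(x,1)}{2c_{0,\beta}(x)}$, $p_\beta(x)=\int_x^0 dy/c_{0,\beta}(y)$, and $$F_\beta(\sigma)=\int_{-\infty}^0 b_{0,\beta}(\xi)e^{-\sigma p_\beta(\xi)}\,d\xi-c_{0,\beta}(0),\qquad \Re\sigma>0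 .$$ *)

theory Defs
  imports "HOL-Analysis.Analysis"
begin

definition erf :: "real \<Rightarrow> real" where
  "erf z = 2 / sqrt pi * (LBINT t=0..z. exp (- (t\<^sup>2)))"

definition fCJ :: "real \<Rightarrow> real \<Rightarrow> real \<Rightarrow> real \<Rightarrow> real" where
  "fCJ \<alpha> \<beta> x u =
     1 / (4 * (1 + erf (u powr (-\<alpha>) / (2 * sqrt \<beta>)))) *
     (1 / sqrt (4 * pi * \<beta>)) * exp (- ((x + u powr (-\<alpha>))\<^sup>2) / (4 * \<beta>))"

definition c0CJ :: "real \<Rightarrow> real \<Rightarrow> real \<Rightarrow> real" where
  "c0CJ \<alpha> \<beta> x = sqrt (2 * (LBINT y:{..x}. fCJ \<alpha> \<beta> y 1))"

definition b0CJ :: "real \<Rightarrow> real \<Rightarrow> real \<Rightarrow> real" where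
  "b0CJ \<alpha> \<beta> x = deriv (\<lambda>u. fCJ \<alpha> \<beta> x u) 1 + fCJ \<alpha> \<beta> x 1 / (2 * c0CJ \<alpha> \<beta> x)"

definition pCJ :: "real \<Rightarrow> real \<Rightarrow> real \<Rightarrow> real" where
  "pCJ \<alpha> \<beta> x = (LBINT y=x..0. 1 / c0CJ \<alpha> \<beta> y)"

definition FCJ :: "real \<Rightarrow> real \<Rightarrow> complex \<Rightarrow> complex" where
  "FCJ \<alpha> \<beta> \<sigma> =
     (LBINT \<xi>:{..0}. complex_of_real (b0CJ \<alpha> \<beta> \<xi>) * exp (- \<sigma> * complex_of_real (pCJ \<alpha> \<beta> \<xi>)))
     - complex_of_real (c0CJ \<alpha> \<beta> 0)"

end

theory Submission
  imports Defs "HOL-Probability.Distributions" "HOL-Real_Asymp.Real_Asymp"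
begin


definition Gd :: "real \<Rightarrow> real \<Rightarrow> real" where "Gd \<beta> y = normal_density (-1) (sqrt (2*\<beta>)) y"
definition Nn :: "real \<Rightarrow> real" where "Nn \<beta> = 1 / (4 * (1 + erf (1 / (2 * sqrt \<beta>))))"

lemma Gd_eq: "\<beta> > 0 \<Longrightarrow> Gd \<beta> y = 1 / sqrt (4 * pi * \<beta>) * exp (- ((y + 1)\<^sup>2) / (4 * \<beta>))"
  unfolding Gd_def normal_density_def by (simp add: power2_eq_square)

lemma fCJ_1: "\<beta> > 0 \<Longrightarrow> fCJ \<alpha> \<beta> x 1 = Nn \<beta> * Gd \<beta> x"
  unfolding fCJ_def Nn_def Gd_eq by simp

lemma gauss_half: "(LBINT t:{0..}. exp (- (t\<^sup>2))) = sqrt pi / 2"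
  using gaussian_moment_0 unfolding set_lebesgue_integral_def
  by (simp add: has_bochner_integral_integral_eq)

lemma gauss_half_int: "set_integrable lborel {0..} (\<lambda>t::real. exp (- (t\<^sup>2)) :: real)"
  unfolding set_integrable_def using gaussian_moment_0 by (auto simp: has_bochner_integral_iff)

lemma erf_Icc: "z \<ge> 0 \<Longrightarrow> erf z = 2 / sqrt pi * (LBINT t:{0..z}. exp (- (t\<^sup>2)))"
  unfolding erf_def using interval_integral_Icc[of 0 z] by (simp add: zero_ereal_def)

lemma erf_nonneg: "z \<ge> 0 \<Longrightarrow> erf z \<ge> 0"
  unfolding erf_Icc set_lebesgue_integral_def
  by (auto intro!: mult_nonneg_nonneg integral_nonneg_AE)

lemma erf_tendsto: "(erf \<longlongrightarrow> 1) at_top"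
proof -
  have "((\<lambda>b. LBINT t:{0..b}. exp (- (t\<^sup>2))) \<longlongrightarrow> sqrt pi / 2) at_top"
    using tendsto_set_lebesgue_integral_at_top[OF _ gauss_half_int] gauss_half by simp
  then have "((\<lambda>b. 2 / sqrt pi * (LBINT t:{0..b}. exp (- (t\<^sup>2)))) \<longlongrightarrow> 2 / sqrt pi * (sqrt pi / 2)) at_top"
    by (intro tendsto_intros)
  then have "((\<lambda>b. 2 / sqrt pi * (LBINT t:{0..b}. exp (- (t\<^sup>2)))) \<longlongrightarrow> 1) at_top" by simp
  then show ?thesis
    by (rule tendsto_cong[THEN iffD1, rotated])
       (auto simp: eventually_at_top_linorder erf_Icc intro!: exI[of _ 0])
qed

lemma erf_deriv: "(erf has_real_derivative (2 / sqrt pi * exp (- (z\<^sup>2)))) (at z)"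
proof -
  have c: "continuous_on {-\<bar>z\<bar>-1..\<bar>z\<bar>+1} (\<lambda>t::real. exp (- (t\<^sup>2)))"
    by (intro continuous_intros)
  have "((\<lambda>u. LBINT t=0..u. exp (- (t\<^sup>2))) has_vector_derivative exp (- (z\<^sup>2))) (at z within {-\<bar>z\<bar>-1..\<bar>z\<bar>+1})"
    unfolding zero_ereal_def apply (rule interval_integral_FTC2[of "-\<bar>z\<bar>-1" 0 "\<bar>z\<bar>+1" "\<lambda>t. exp (- (t\<^sup>2))" z])
    using c by simp_all
  then have "((\<lambda>u. LBINT t=0..u. exp (- (t\<^sup>2))) has_vector_derivative exp (- (z\<^sup>2))) (at z)"
    by (subst (asm) at_within_interior) (auto simp: interior_atLeastAtMost_real)
  then have "((\<lambda>u. LBINT t=0..u. exp (- (t\<^sup>2))) has_real_derivative exp (- (z\<^sup>2))) (at z)"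
    by (simp add: has_real_derivative_iff_has_vector_derivative)
  then show ?thesis unfolding erf_def[abs_def]
    by (rule DERIV_cmult)
qed

lemma Nn_pos: "\<beta> > 0 \<Longrightarrow> 0 < Nn \<beta>"
  unfolding Nn_def using erf_nonneg[of "1 / (2 * sqrt \<beta>)"] by auto

lemma Nn_le: "\<beta> > 0 \<Longrightarrow> Nn \<beta> \<le> 1/4"
  unfolding Nn_def using erf_nonneg[of "1 / (2 * sqrt \<beta>)"] by (auto simp: field_simps)

lemma Nn_tendsto: "(Nn \<longlongrightarrow> 1/8) (at_right 0)"
proof -
  have "filterlim (\<lambda>\<beta>::real. 1 / (2 * sqrt \<beta>)) at_top (at_right 0)"
    by real_asymp
  then have "((\<lambda>\<beta>. erf (1 / (2 * sqrt \<beta>))) \<longlongrightarrow> 1) (at_right 0)"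
    using erf_tendsto filterlim_compose by blast
  then have "((\<lambda>\<beta>. 1 / (4 * (1 + erf (1 / (2 * sqrt \<beta>))))) \<longlongrightarrow> 1 / (4 * (1 + 1))) (at_right 0)"
    by (intro tendsto_intros) auto
  then show ?thesis unfolding Nn_def[abs_def] by simp
qed



lemma Gd_pos: "\<beta> > 0 \<Longrightarrow> 0 < Gd \<beta> y"
  unfolding Gd_def by (rule normal_density_pos) simp

lemma Gd_nonneg: "0 \<le> Gd \<beta> y"
  unfolding Gd_def by simp

lemma Gd_int: "\<beta> > 0 \<Longrightarrow> integrable lborel (Gd \<beta>)"
  unfolding Gd_def[abs_def] by (rule integrable_normal_density) simp

lemma Gd_total: "\<beta> > 0 \<Longrightarrow> (\<integral>y. Gd \<beta> y \<partial>lborel) = 1"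
  unfolding Gd_def[abs_def] by (rule integral_normal_density) simp

lemma Gd_moment2: "\<beta> > 0 \<Longrightarrow> has_bochner_integral lborel (\<lambda>y. Gd \<beta> y * (y+1)^2) (2*\<beta>)"
proof -
  assume b: "\<beta> > 0"
  have "has_bochner_integral lborel (\<lambda>x. normal_density (-1) (sqrt (2*\<beta>)) x * (x - (-1)) ^ (2 * 1))
    (fact (2 * 1) / ((2 / (sqrt (2*\<beta>))\<^sup>2)^1 * fact 1))"
    by (rule normal_moment_even) (use b in simp)
  then show ?thesis using b unfolding Gd_def by simp
qed

lemma Gd_abs_int: "\<beta> > 0 \<Longrightarrow> integrable lborel (\<lambda>y. Gd \<beta> y * \<bar>y+1\<bar>)"
proof -
  assume b: "\<beta> > 0"
  have "integrable lborel (\<lambda>x. normal_density (-1) (sqrt (2*\<beta>)) x * \<bar>x - (-1)\<bar>^1)"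
    by (rule integrable_normal_moment_abs) (use b in simp)
  then show ?thesis unfolding Gd_def by simp
qed

lemma Gd_fun: "\<beta> > 0 \<Longrightarrow> Gd \<beta> = (\<lambda>y. 1 / sqrt (4 * pi * \<beta>) * exp (- ((y + 1)\<^sup>2) / (4 * \<beta>)))"
  using Gd_eq by auto

lemma Gd_deriv: "\<beta> > 0 \<Longrightarrow> (Gd \<beta> has_real_derivative (-(y+1)/(2*\<beta>) * Gd \<beta> y)) (at y)"
proof -
  assume b: "\<beta> > 0"
  have d0: "((\<lambda>y. (y+1)^2) has_real_derivative 2*(y+1)) (at y)"
    by (auto intro!: derivative_eq_intros)
  have d1: "((\<lambda>y. - ((y + 1)\<^sup>2) / (4 * \<beta>)) has_real_derivative (- (2 * (y+1)) / (4*\<beta>))) (at y)"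
    using DERIV_cdivide[OF DERIV_minus[OF d0], of "4*\<beta>"] by simp
  have "((\<lambda>y. 1 / sqrt (4 * pi * \<beta>) * exp (- ((y + 1)\<^sup>2) / (4 * \<beta>))) has_real_derivative
      1 / sqrt (4 * pi * \<beta>) * (exp (- ((y + 1)\<^sup>2) / (4 * \<beta>)) * (- (2 * (y+1)) / (4*\<beta>)))) (at y)"
    by (rule DERIV_cmult[OF DERIV_fun_exp[OF d1]])
  moreover have "1 / sqrt (4 * pi * \<beta>) * (exp (- ((y + 1)\<^sup>2) / (4 * \<beta>)) * (- (2 * (y+1)) / (4*\<beta>)))
      = -(y+1)/(2*\<beta>) * Gd \<beta> y"
    using b by (simp add: Gd_eq field_simps)
  ultimately show ?thesis using Gd_fun[OF b] by simp
qed

lemma Gd_cont: "\<beta> > 0 \<Longrightarrow> isCont (Gd \<beta>) y"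
  using Gd_deriv DERIV_isCont by blast

lemma Gd_measurable[measurable]: "Gd \<beta> \<in> borel_measurable borel"
  unfolding Gd_def[abs_def] by simp

lemma Gd_bot: "\<beta> > 0 \<Longrightarrow> (Gd \<beta> \<longlongrightarrow> 0) at_bot"
  unfolding Gd_fun by real_asymp

lemma Gd_at0: "\<beta> > 0 \<Longrightarrow> Gd \<beta> 0 = 1 / sqrt (4 * pi * \<beta>) * exp (- 1 / (4 * \<beta>))"
  by (simp add: Gd_eq)

lemma cheb:
  assumes b: "\<beta> > 0" and t: "t > 0"
  shows "(\<integral>y. indicator {y. t \<le> \<bar>y+1\<bar>} y * Gd \<beta> y \<partial>lborel) \<le> 2*\<beta>/t\<^sup>2"
proof -
  have i1: "integrable lborel (\<lambda>y. indicator {y. t \<le> \<bar>y+1\<bar>} y * Gd \<beta> y)"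
    using integrable_mult_indicator[OF _ Gd_int[OF b], of "{y. t \<le> \<bar>y+1\<bar>}"] by simp
  have m: "has_bochner_integral lborel (\<lambda>y. Gd \<beta> y * (y+1)^2 / t\<^sup>2) (2*\<beta>/t\<^sup>2)"
    using has_bochner_integral_divide_zero[OF Gd_moment2[OF b], of "t\<^sup>2"] by simp
  have "(\<integral>y. indicator {y. t \<le> \<bar>y+1\<bar>} y * Gd \<beta> y \<partial>lborel) \<le> (\<integral>y. Gd \<beta> y * (y+1)^2 / t\<^sup>2 \<partial>lborel)"
  proof (rule integral_mono[OF i1])
    show "integrable lborel (\<lambda>y. Gd \<beta> y * (y+1)^2 / t\<^sup>2)" using m by (rule integrable.intros)
    fix y :: real
    show "indicator {y. t \<le> \<bar>y+1\<bar>} y * Gd \<beta> y \<le> Gd \<beta> y * (y+1)^2 / t\<^sup>2"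
    proof (cases "t \<le> \<bar>y+1\<bar>")
      case True
      then have "t\<^sup>2 \<le> (y+1)^2" using t
        by (metis abs_le_square_iff abs_of_pos)
      then have "1 \<le> (y+1)^2 / t\<^sup>2" using t by simp
      then have "Gd \<beta> y * 1 \<le> Gd \<beta> y * ((y+1)^2 / t\<^sup>2)"
        by (rule mult_left_mono[OF _ Gd_nonneg])
      then show ?thesis using True by simp
    next
      case False then show ?thesis using Gd_nonneg[of \<beta> y] by simp
    qed
  qed
  also have "\<dots> = 2*\<beta>/t\<^sup>2" using m by (rule has_bochner_integral_integral_eq)
  finally show ?thesis .
qed



definition Q :: "real \<Rightarrow> real \<Rightarrow> real" where "Q \<beta> x = (LBINT y:{..x}. Gd \<beta> y)"

lemma Gd_set_int: "\<beta> > 0 \<Longrightarrow> A \<in> sets borel \<Longrightarrow> set_integrable lborel A (Gd \<beta>)"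
  unfolding set_integrable_def by (rule integrable_mult_indicator) (auto intro: Gd_int)

lemma Q_split:
  assumes b: "\<beta> > 0" and ab: "a \<le> b"
  shows "Q \<beta> b = Q \<beta> a + (LBINT y=a..b. Gd \<beta> y)"
proof -
  have "{..b} = {..a} \<union> {a<..b}" using ab by auto
  then have "Q \<beta> b = (LBINT y:{..a} \<union> {a<..b}. Gd \<beta> y)" unfolding Q_def by simp
  also have "\<dots> = Q \<beta> a + (LBINT y:{a<..b}. Gd \<beta> y)"
    unfolding Q_def by (rule set_integral_Un) (auto intro!: Gd_set_int b)
  also have "(LBINT y:{a<..b}. Gd \<beta> y) = (LBINT y=a..b. Gd \<beta> y)"
    using interval_integral_Ioc[OF ab, of "Gd \<beta>"] by simp
  finally show ?thesis .
qed

lemma Q_nonneg: "0 \<le> Q \<beta> x"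
  unfolding Q_def set_lebesgue_integral_def by (auto intro!: integral_nonneg_AE simp: Gd_nonneg)

lemma Q_le_int: 
  assumes b: "\<beta> > 0" and A: "A \<subseteq> B" "A \<in> sets borel" "B \<in> sets borel"
  shows "(LBINT y:A. Gd \<beta> y) \<le> (LBINT y:B. Gd \<beta> y)"
  unfolding set_lebesgue_integral_def
  by (rule integral_mono) (use A Gd_set_int[OF b] Gd_nonneg in \<open>auto simp: set_integrable_def split: split_indicator\<close>)

lemma Q_le1: "\<beta> > 0 \<Longrightarrow> Q \<beta> x \<le> 1"
  using Q_le_int[of \<beta> "{..x}" UNIV] Gd_total[of \<beta>] unfolding Q_def
  by (simp add: set_lebesgue_integral_def)

lemma Q_small:
  assumes b: "\<beta> > 0" and x: "x < -1"
  shows "Q \<beta> x \<le> 2*\<beta>/(x+1)\<^sup>2"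
proof -
  have "Q \<beta> x \<le> (LBINT y:{y. -(x+1) \<le> \<bar>y+1\<bar>}. Gd \<beta> y)"
    unfolding Q_def by (rule Q_le_int[OF b]) auto
  also have "\<dots> \<le> 2*\<beta>/(-(x+1))\<^sup>2"
    using cheb[OF b, of "-(x+1)"] x unfolding set_lebesgue_integral_def by (simp del: power2_minus)
  also have "(-(x+1))\<^sup>2 = (x+1)\<^sup>2" by (simp add: power2_eq_square algebra_simps)
  finally show ?thesis .
qed

lemma Q_large:
  assumes b: "\<beta> > 0" and x: "x > -1"
  shows "1 - 2*\<beta>/(x+1)\<^sup>2 \<le> Q \<beta> x"
proof -
  have "1 = (LBINT y:{..x} \<union> {x<..}. Gd \<beta> y)"
  proof -
    have "{..x} \<union> {x<..} = (UNIV::real set)" by auto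
    then show ?thesis using Gd_total[OF b] by (simp add: set_lebesgue_integral_def)
  qed
  also have "\<dots> = Q \<beta> x + (LBINT y:{x<..}. Gd \<beta> y)"
    unfolding Q_def by (rule set_integral_Un) (auto intro!: Gd_set_int b)
  finally have 1: "1 = Q \<beta> x + (LBINT y:{x<..}. Gd \<beta> y)" .
  have "(LBINT y:{x<..}. Gd \<beta> y) \<le> (LBINT y:{y. (x+1) \<le> \<bar>y+1\<bar>}. Gd \<beta> y)"
    by (rule Q_le_int[OF b]) auto
  also have "\<dots> \<le> 2*\<beta>/(x+1)\<^sup>2"
    using cheb[OF b, of "x+1"] x unfolding set_lebesgue_integral_def by simp
  finally show ?thesis using 1 by linarith
qed

lemma Q_deriv:
  assumes b: "\<beta> > 0"
  shows "(Q \<beta> has_real_derivative Gd \<beta> x) (at x)"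
proof -
  have c: "continuous_on {x-1..x+1} (Gd \<beta>)"
    using Gd_cont[OF b] by (simp add: continuous_at_imp_continuous_on)
  have "((\<lambda>u. LBINT y=x-1..u. Gd \<beta> y) has_vector_derivative Gd \<beta> x) (at x within {x-1..x+1})"
    by (rule interval_integral_FTC2[of "x-1" "x-1" "x+1" "Gd \<beta>" x]) (use c in auto)
  then have "((\<lambda>u. Q \<beta> (x-1) + (LBINT y=x-1..u. Gd \<beta> y)) has_vector_derivative 0 + Gd \<beta> x) (at x within {x-1..x+1})"
    by (intro derivative_intros) 
  then have d: "((\<lambda>u. Q \<beta> (x-1) + (LBINT y=x-1..u. Gd \<beta> y)) has_vector_derivative Gd \<beta> x) (at x within {x-1..x+1})"
    by simp
  have "(Q \<beta> has_vector_derivative Gd \<beta> x) (at x within {x-1..x+1})"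
    by (rule has_vector_derivative_transform[OF _ _ d]) (auto simp: Q_split[OF b])
  then have "(Q \<beta> has_vector_derivative Gd \<beta> x) (at x)"
    by (subst (asm) at_within_interior) auto
  then show ?thesis by (simp add: has_real_derivative_iff_has_vector_derivative)
qed

lemma Q_pos:
  assumes b: "\<beta> > 0" shows "0 < Q \<beta> x"
proof -
  have "Q \<beta> (x-1) < Q \<beta> x"
    by (rule DERIV_pos_imp_increasing) (use Q_deriv[OF b] Gd_pos[OF b] in auto)
  then show ?thesis using Q_nonneg[of \<beta> "x-1"] by linarith
qed

lemma Q_mono:
  assumes b: "\<beta> > 0" and ab: "a \<le> b" shows "Q \<beta> a \<le> Q \<beta> b"
  by (rule DERIV_nonneg_imp_nondecreasing[OF ab]) (use Q_deriv[OF b] Gd_nonneg in auto)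

lemma Q_bot:
  assumes b: "\<beta> > 0" shows "(Q \<beta> \<longlongrightarrow> 0) at_bot"
proof (rule tendsto_sandwich[of "\<lambda>_. 0" _ _ "\<lambda>x. 2*\<beta>/(x+1)\<^sup>2"])
  show "\<forall>\<^sub>F x in at_bot. 0 \<le> Q \<beta> x" by (simp add: Q_nonneg)
  show "\<forall>\<^sub>F x in at_bot. Q \<beta> x \<le> 2*\<beta>/(x+1)\<^sup>2"
    using Q_small[OF b] by (auto simp: eventually_at_bot_linorder intro!: exI[of _ "-2"])
  show "((\<lambda>x. 2*\<beta>/(x+1)\<^sup>2) \<longlongrightarrow> 0) at_bot" by real_asymp
qed simp

definition Cf :: "real \<Rightarrow> real \<Rightarrow> real" where "Cf \<beta> x = sqrt (2 * Nn \<beta> * Q \<beta> x)"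

lemma c0_eq: "\<beta> > 0 \<Longrightarrow> c0CJ \<alpha> \<beta> x = Cf \<beta> x"
  unfolding c0CJ_def Cf_def Q_def by (simp add: fCJ_1)

lemma Cf_pos: "\<beta> > 0 \<Longrightarrow> 0 < Cf \<beta> x"
  unfolding Cf_def using Nn_pos Q_pos by auto

lemma Cf_le: "\<beta> > 0 \<Longrightarrow> Cf \<beta> x \<le> 1"
proof -
  assume b: "\<beta> > 0"
  have "2 * Nn \<beta> * Q \<beta> x \<le> 2 * (1/4) * 1"
    using Nn_le[OF b] Nn_pos[OF b] Q_le1[OF b, of x] Q_nonneg[of \<beta> x]
    by (intro mult_mono) auto
  then show ?thesis unfolding Cf_def by (simp add: real_sqrt_le_1_iff)
qed

lemma Cf_mono: "\<beta> > 0 \<Longrightarrow> a \<le> b \<Longrightarrow> Cf \<beta> a \<le> Cf \<beta> b"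
  unfolding Cf_def using Q_mono Nn_pos by (auto intro!: mult_left_mono)

definition Cd :: "real \<Rightarrow> real \<Rightarrow> real" where "Cd \<beta> x = Nn \<beta> * Gd \<beta> x / Cf \<beta> x"

lemma Cf_deriv:
  assumes b: "\<beta> > 0" shows "(Cf \<beta> has_real_derivative Cd \<beta> x) (at x)"
proof -
  have pos: "0 < 2 * Nn \<beta> * Q \<beta> x" using Nn_pos[OF b] Q_pos[OF b] by auto
  have "((\<lambda>x. sqrt (2 * Nn \<beta> * Q \<beta> x)) has_real_derivative
       (inverse (sqrt (2 * Nn \<beta> * Q \<beta> x)) / 2) * (2 * Nn \<beta> * Gd \<beta> x)) (at x)"
    by (rule DERIV_chain2[OF DERIV_real_sqrt[OF pos] DERIV_cmult[OF Q_deriv[OF b]]])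
  moreover have "(inverse (sqrt (2 * Nn \<beta> * Q \<beta> x)) / 2) * (2 * Nn \<beta> * Gd \<beta> x) = Cd \<beta> x"
    unfolding Cd_def Cf_def by (simp add: field_simps)
  ultimately show ?thesis unfolding Cf_def[abs_def] by simp
qed

lemma Cf_cont: "\<beta> > 0 \<Longrightarrow> isCont (Cf \<beta>) x"
  using Cf_deriv DERIV_isCont by blast

lemma Cd_nonneg: "\<beta> > 0 \<Longrightarrow> 0 \<le> Cd \<beta> x"
  unfolding Cd_def using Nn_pos[of \<beta>] Gd_nonneg[of \<beta> x] Cf_pos[of \<beta> x] by (auto intro!: divide_nonneg_pos)

lemma Cd_cont: "\<beta> > 0 \<Longrightarrow> isCont (Cd \<beta>) x"
  unfolding Cd_def[abs_def] using Cf_pos[of \<beta> x]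
  by (auto intro!: continuous_intros Cf_cont Gd_cont)

lemma Cf_bot: "\<beta> > 0 \<Longrightarrow> (Cf \<beta> \<longlongrightarrow> 0) at_bot"
proof -
  assume b: "\<beta> > 0"
  have "((\<lambda>x. sqrt (2 * Nn \<beta> * Q \<beta> x)) \<longlongrightarrow> sqrt (2 * Nn \<beta> * 0)) at_bot"
    by (intro tendsto_intros Q_bot b)
  then show ?thesis unfolding Cf_def[abs_def] by simp
qed



definition Pf :: "real \<Rightarrow> real \<Rightarrow> real" where "Pf \<beta> \<xi> = (LBINT y=\<xi>..0. 1 / Cf \<beta> y)"

lemma p_eq: "\<beta> > 0 \<Longrightarrow> pCJ \<alpha> \<beta> \<xi> = Pf \<beta> \<xi>"
proof -
  assume b: "\<beta> > 0"
  have "c0CJ \<alpha> \<beta> = Cf \<beta>" using c0_eq[OF b] by auto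
  then show ?thesis unfolding pCJ_def Pf_def by simp
qed

lemma Pf_0: "Pf \<beta> 0 = 0"
  unfolding Pf_def by (simp add: zero_ereal_def)

lemma Pf_deriv:
  assumes b: "\<beta> > 0" shows "(Pf \<beta> has_real_derivative - (1 / Cf \<beta> \<xi>)) (at \<xi>)"
proof -
  have c: "continuous_on {-\<bar>\<xi>\<bar>-1..\<bar>\<xi>\<bar>+1} (\<lambda>y. 1 / Cf \<beta> y)"
    using Cf_cont[OF b] Cf_pos[OF b]
    by (intro continuous_at_imp_continuous_on ballI continuous_intros) (auto simp: less_imp_neq[symmetric])
  have "((\<lambda>u. LBINT y=0..u. 1 / Cf \<beta> y) has_vector_derivative 1 / Cf \<beta> \<xi>) (at \<xi> within {-\<bar>\<xi>\<bar>-1..\<bar>\<xi>\<bar>+1})"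
    unfolding zero_ereal_def
    by (rule interval_integral_FTC2[of "-\<bar>\<xi>\<bar>-1" 0 "\<bar>\<xi>\<bar>+1" "\<lambda>y. 1 / Cf \<beta> y" \<xi>]) (use c in simp_all)
  then have "((\<lambda>u. LBINT y=0..u. 1 / Cf \<beta> y) has_vector_derivative 1 / Cf \<beta> \<xi>) (at \<xi>)"
    by (subst (asm) at_within_interior) auto
  then have "((\<lambda>u. LBINT y=0..u. 1 / Cf \<beta> y) has_real_derivative 1 / Cf \<beta> \<xi>) (at \<xi>)"
    by (simp add: has_real_derivative_iff_has_vector_derivative)
  from DERIV_minus[OF this]
  have "((\<lambda>u. - (LBINT y=0..u. 1 / Cf \<beta> y)) has_real_derivative - (1 / Cf \<beta> \<xi>)) (at \<xi>)" .
  moreover have "Pf \<beta> = (\<lambda>u. - (LBINT y=0..u. 1 / Cf \<beta> y))"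
    unfolding Pf_def by (auto intro!: ext interval_integral_endpoints_reverse)
  ultimately show ?thesis by simp
qed

lemma Pf_cont: "\<beta> > 0 \<Longrightarrow> isCont (Pf \<beta>) x"
  using Pf_deriv DERIV_isCont by blast

lemma Pf_lower:
  assumes b: "\<beta> > 0" and x: "\<xi> \<le> m" "m \<le> 0"
  shows "(m - \<xi>) / Cf \<beta> m + Pf \<beta> m \<le> Pf \<beta> \<xi>"
proof -
  have "Pf \<beta> m + m / Cf \<beta> m \<le> Pf \<beta> \<xi> + \<xi> / Cf \<beta> m"
  proof (rule DERIV_nonpos_imp_nonincreasing[OF x(1), of "\<lambda>t. Pf \<beta> t + t / Cf \<beta> m"])
    fix t assume t: "\<xi> \<le> t" "t \<le> m"
    have "Cf \<beta> t \<le> Cf \<beta> m" using Cf_mono[OF b t(2)] .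
    then have le: "- (1 / Cf \<beta> t) + 1 / Cf \<beta> m \<le> 0"
      using Cf_pos[OF b, of t] Cf_pos[OF b, of m] by (simp add: frac_le)
    have "((\<lambda>t. Pf \<beta> t + t / Cf \<beta> m) has_real_derivative - (1 / Cf \<beta> t) + 1 / Cf \<beta> m) (at t)"
      using DERIV_add[OF Pf_deriv[OF b] DERIV_cdivide[OF DERIV_ident]] by simp
    then show "\<exists>y. ((\<lambda>t. Pf \<beta> t + t / Cf \<beta> m) has_real_derivative y) (at t) \<and> y \<le> 0"
      using le by blast
  qed
  then show ?thesis by (simp add: diff_divide_distrib)
qed

lemma Pf_nonneg: "\<beta> > 0 \<Longrightarrow> \<xi> \<le> 0 \<Longrightarrow> 0 \<le> Pf \<beta> \<xi>"
proof -
  assume b: "\<beta> > 0" and x: "\<xi> \<le> 0"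
  have a: "(0-\<xi>)/Cf \<beta> 0 + Pf \<beta> 0 \<le> Pf \<beta> \<xi>" by (rule Pf_lower) (use b x in auto)
  have c: "(0-\<xi>)/Cf \<beta> 0 \<ge> 0" using Cf_pos[OF b, of 0] x by (simp add: divide_nonpos_pos)
  show ?thesis using a c Pf_0[of \<beta>] by linarith
qed

lemma Pf_lower2: "\<beta> > 0 \<Longrightarrow> \<xi> \<le> m \<Longrightarrow> m \<le> 0 \<Longrightarrow> (m - \<xi>) / Cf \<beta> m \<le> Pf \<beta> \<xi>"
  using Pf_lower[of \<beta> \<xi> m] Pf_nonneg[of \<beta> m] by linarith

lemma Pf_lower0: "\<beta> > 0 \<Longrightarrow> \<xi> \<le> 0 \<Longrightarrow> - \<xi> / Cf \<beta> 0 \<le> Pf \<beta> \<xi>"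
  using Pf_lower2[of \<beta> \<xi> 0] by simp

lemma Pf_ge: "\<beta> > 0 \<Longrightarrow> \<xi> \<le> 0 \<Longrightarrow> - \<xi> \<le> Pf \<beta> \<xi>"
proof -
  assume b: "\<beta> > 0" and x: "\<xi> \<le> 0"
  have "\<xi> * 1 \<le> \<xi> * Cf \<beta> 0" by (rule mult_left_mono_neg) (use Cf_le[OF b, of 0] x in auto)
  then have "\<xi> / Cf \<beta> 0 \<le> \<xi>" using Cf_pos[OF b, of 0] by (simp add: divide_le_eq)
  then have "- \<xi> \<le> - \<xi> / Cf \<beta> 0" by simp
  then show ?thesis using Pf_lower0[OF b x] by linarith
qed

lemma Pf_upper:
  assumes b: "\<beta> > 0" and x: "\<xi> \<le> 0"
  shows "Pf \<beta> \<xi> \<le> - \<xi> / Cf \<beta> \<xi>"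
proof -
  have "Pf \<beta> \<xi> + \<xi> / Cf \<beta> \<xi> \<le> Pf \<beta> 0 + 0 / Cf \<beta> \<xi>"
  proof (rule DERIV_nonneg_imp_nondecreasing[OF x, of "\<lambda>t. Pf \<beta> t + t / Cf \<beta> \<xi>"])
    fix t assume t: "\<xi> \<le> t" "t \<le> 0"
    have "Cf \<beta> \<xi> \<le> Cf \<beta> t" using Cf_mono[OF b t(1)] .
    then have le: "0 \<le> - (1 / Cf \<beta> t) + 1 / Cf \<beta> \<xi>"
      using Cf_pos[OF b, of t] Cf_pos[OF b, of \<xi>] by (simp add: frac_le)
    have "((\<lambda>t. Pf \<beta> t + t / Cf \<beta> \<xi>) has_real_derivative - (1 / Cf \<beta> t) + 1 / Cf \<beta> \<xi>) (at t)"
      using DERIV_add[OF Pf_deriv[OF b] DERIV_cdivide[OF DERIV_ident]] by simp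
    then show "\<exists>y. ((\<lambda>t. Pf \<beta> t + t / Cf \<beta> \<xi>) has_real_derivative y) (at t) \<and> 0 \<le> y"
      using le by blast
  qed
  then show ?thesis by (simp add: Pf_0)
qed

definition Ef :: "complex \<Rightarrow> real \<Rightarrow> real \<Rightarrow> complex" where
  "Ef \<sigma> \<beta> \<xi> = exp (- \<sigma> * complex_of_real (Pf \<beta> \<xi>))"

lemma Ef_deriv:
  assumes b: "\<beta> > 0"
  shows "(Ef \<sigma> \<beta> has_vector_derivative (\<sigma> / complex_of_real (Cf \<beta> \<xi>)) * Ef \<sigma> \<beta> \<xi>) (at \<xi>)"
proof -
  have d1: "((\<lambda>\<xi>. - \<sigma> * complex_of_real (Pf \<beta> \<xi>)) has_vector_derivative - \<sigma> * complex_of_real (- (1 / Cf \<beta> \<xi>))) (at \<xi>)"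
    by (intro has_vector_derivative_mult_right has_vector_derivative_of_real Pf_deriv b)
  have "(((\<lambda>z. exp z) \<circ> (\<lambda>\<xi>. - \<sigma> * complex_of_real (Pf \<beta> \<xi>))) has_vector_derivative
      (- \<sigma> * complex_of_real (- (1 / Cf \<beta> \<xi>))) * exp (- \<sigma> * complex_of_real (Pf \<beta> \<xi>))) (at \<xi>)"
    by (rule field_vector_diff_chain_at[OF d1 DERIV_exp])
  moreover have "(- \<sigma> * complex_of_real (- (1 / Cf \<beta> \<xi>))) = \<sigma> / complex_of_real (Cf \<beta> \<xi>)"
    by (simp add: divide_inverse)
  ultimately show ?thesis unfolding Ef_def[abs_def] o_def by simp
qed

lemma Ef_cont: "\<beta> > 0 \<Longrightarrow> isCont (Ef \<sigma> \<beta>) x"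
  using Ef_deriv has_vector_derivative_continuous by blast

lemma Ef_meas[measurable]: "\<beta> > 0 \<Longrightarrow> Ef \<sigma> \<beta> \<in> borel_measurable borel"
  by (rule borel_measurable_continuous_onI) (simp add: continuous_at_imp_continuous_on Ef_cont)

lemma norm_Ef: "norm (Ef \<sigma> \<beta> \<xi>) = exp (- Re \<sigma> * Pf \<beta> \<xi>)"
  unfolding Ef_def by simp

lemma Ef_bound:
  assumes b: "\<beta> > 0" and s: "Re \<sigma> > 0" and x: "\<xi> \<le> 0"
  shows "norm (Ef \<sigma> \<beta> \<xi>) \<le> exp (Re \<sigma> * \<xi>)"
proof -
  have "Re \<sigma> * (- \<xi>) \<le> Re \<sigma> * Pf \<beta> \<xi>" using Pf_ge[OF b x] s by (intro mult_left_mono) auto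
  then show ?thesis unfolding norm_Ef by simp
qed

lemma Ef_le1: "\<beta> > 0 \<Longrightarrow> Re \<sigma> > 0 \<Longrightarrow> \<xi> \<le> 0 \<Longrightarrow> norm (Ef \<sigma> \<beta> \<xi>) \<le> 1"
  using Ef_bound[of \<beta> \<sigma> \<xi>] by (smt (verit) exp_le_one_iff mult_nonneg_nonpos)

lemma Ef_0: "Ef \<sigma> \<beta> 0 = 1"
  unfolding Ef_def by (simp add: Pf_0)



lemma at_left_of_cont: "isCont f x \<Longrightarrow> (f \<longlongrightarrow> f x) (at_left x)"
  unfolding isCont_def by (rule tendsto_mono[OF at_within_le_at])

lemma Cd_int:
  assumes b: "\<beta> > 0"
  shows "set_integrable lborel {..<0} (Cd \<beta>)" "(LBINT x:{..<0}. Cd \<beta> x) = Cf \<beta> 0"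
proof -
  have A: "((Cf \<beta> \<circ> real_of_ereal) \<longlongrightarrow> 0) (at_right (-\<infinity>))"
    unfolding ereal_tendsto_simps1 by (rule Cf_bot[OF b])
  have B: "((Cf \<beta> \<circ> real_of_ereal) \<longlongrightarrow> Cf \<beta> 0) (at_left (ereal 0))"
    unfolding ereal_tendsto_simps1 by (rule at_left_of_cont[OF Cf_cont[OF b]])
  note r = interval_integral_FTC_nonneg[of "-\<infinity>" "ereal 0" "Cf \<beta>" "Cd \<beta>" 0 "Cf \<beta> 0", OF _ Cf_deriv[OF b] Cd_cont[OF b] _ A B]
  show "set_integrable lborel {..<0} (Cd \<beta>)" using r(1) Cd_nonneg[OF b] by simp
  have "(LBINT x=-\<infinity>..ereal 0. Cd \<beta> x) = Cf \<beta> 0" using r(2) Cd_nonneg[OF b] by simp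
  then show "(LBINT x:{..<0}. Cd \<beta> x) = Cf \<beta> 0"
    by (simp add: interval_lebesgue_integral_le_eq)
qed

lemma exp_int:
  assumes c: "c > (0::real)"
  shows "set_integrable lborel {..<0} (\<lambda>x. exp (c * x))"
proof -
  have d: "\<And>x. ((\<lambda>x. exp (c * x) / c) has_real_derivative exp (c * x)) (at x)"
  proof -
    fix x
    have "((\<lambda>x. exp (c * x) / c) has_real_derivative exp (c * x) * (c * 1) / c) (at x)"
      by (intro DERIV_cdivide DERIV_fun_exp DERIV_cmult DERIV_ident)
    moreover have "exp (c * x) * (c * 1) / c = exp (c * x)" using assms by simp
    ultimately show "((\<lambda>x. exp (c * x) / c) has_real_derivative exp (c * x)) (at x)" by simp
  qed
  have A: "(((\<lambda>x. exp (c * x) / c) \<circ> real_of_ereal) \<longlongrightarrow> 0) (at_right (-\<infinity>))"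
    unfolding ereal_tendsto_simps1 using c by real_asymp
  have B: "(((\<lambda>x. exp (c * x) / c) \<circ> real_of_ereal) \<longlongrightarrow> exp (c * 0) / c) (at_left (ereal 0))"
    unfolding ereal_tendsto_simps1 by (rule at_left_of_cont) (use c in \<open>auto intro!: continuous_intros\<close>)
  note r = interval_integral_FTC_nonneg[of "-\<infinity>" "ereal 0" "\<lambda>x. exp (c * x) / c" "\<lambda>x. exp (c * x)", OF _ d _ _ A B]
  show ?thesis using r(1) by simp
qed

context
  fixes \<beta> :: real and \<sigma> :: complex
  assumes b: "\<beta> > 0" and s: "Re \<sigma> > 0"
begin

lemma Ef_int: "set_integrable lborel {..<0} (Ef \<sigma> \<beta>)"
  by (rule set_integrable_bound[OF exp_int[OF s]])
     (auto simp: set_borel_measurable_def Ef_bound[OF b s] intro!: borel_measurable_continuous_on_indicator continuous_at_imp_continuous_on Ef_cont[OF b])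

lemma CdE_int: "set_integrable lborel {..<0} (\<lambda>x. complex_of_real (Cd \<beta> x) * Ef \<sigma> \<beta> x)"
proof (rule set_integrable_bound[OF Cd_int(1)[OF b]])
  show "set_borel_measurable lborel {..<0} (\<lambda>x. complex_of_real (Cd \<beta> x) * Ef \<sigma> \<beta> x)"
    unfolding set_borel_measurable_def
    by (auto intro!: borel_measurable_continuous_on_indicator continuous_at_imp_continuous_on continuous_intros Cd_cont[OF b] Ef_cont[OF b])
  show "AE x in lborel. x \<in> {..<0} \<longrightarrow> norm (complex_of_real (Cd \<beta> x) * Ef \<sigma> \<beta> x) \<le> norm (Cd \<beta> x)"
  proof (intro AE_I2 impI)
    fix x :: real assume "x \<in> {..<0}"
    then have "norm (Ef \<sigma> \<beta> x) \<le> 1" using Ef_le1[OF b s] by auto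
    then show "norm (complex_of_real (Cd \<beta> x) * Ef \<sigma> \<beta> x) \<le> norm (Cd \<beta> x)"
      by (simp add: norm_mult mult_left_le)
  qed
qed

lemma GdE_int: "set_integrable lborel {..<0} (\<lambda>x. complex_of_real (Gd \<beta> x) * Ef \<sigma> \<beta> x)"
proof (rule set_integrable_bound[OF Gd_set_int[OF b, of "{..<0}"]])
  show "set_borel_measurable lborel {..<0} (\<lambda>x. complex_of_real (Gd \<beta> x) * Ef \<sigma> \<beta> x)"
    unfolding set_borel_measurable_def
    by (auto intro!: borel_measurable_continuous_on_indicator continuous_at_imp_continuous_on continuous_intros Gd_cont[OF b] Ef_cont[OF b])
  show "AE x in lborel. x \<in> {..<0} \<longrightarrow> norm (complex_of_real (Gd \<beta> x) * Ef \<sigma> \<beta> x) \<le> norm (Gd \<beta> x)"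
  proof (intro AE_I2 impI)
    fix x :: real assume "x \<in> {..<0}"
    then have "norm (Ef \<sigma> \<beta> x) \<le> 1" using Ef_le1[OF b s] by auto
    then show "norm (complex_of_real (Gd \<beta> x) * Ef \<sigma> \<beta> x) \<le> norm (Gd \<beta> x)"
      by (simp add: norm_mult mult_left_le)
  qed
qed (simp)

definition Gdd :: "real \<Rightarrow> real" where "Gdd x = - ((x+1) * Gd \<beta> x / (2*\<beta>))"

lemma Gdd_int: "set_integrable lborel {..<0} Gdd"
proof -
  have "integrable lborel (\<lambda>x. Gd \<beta> x * \<bar>x+1\<bar> / (2*\<beta>))"
    using Gd_abs_int[OF b] by simp
  then have i: "set_integrable lborel {..<0} (\<lambda>x. Gd \<beta> x * \<bar>x+1\<bar> / (2*\<beta>))"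
    unfolding set_integrable_def by (intro integrable_mult_indicator) auto
  have n: "\<And>x. \<bar>Gdd x\<bar> = Gd \<beta> x * \<bar>x+1\<bar> / (2*\<beta>)"
    using b Gd_nonneg[of \<beta>] unfolding Gdd_def by (simp add: abs_mult)
  show ?thesis
  proof (rule set_integrable_bound[OF i])
    show "set_borel_measurable lborel {..<0} Gdd"
      unfolding set_borel_measurable_def Gdd_def by simp
    show "AE x in lborel. x \<in> {..<0} \<longrightarrow> norm (Gdd x) \<le> norm (Gd \<beta> x * \<bar>x+1\<bar> / (2*\<beta>))"
      using b Gd_nonneg[of \<beta>] by (intro AE_I2) (simp add: n abs_mult)
  qed
qed

lemma GddE_int: "set_integrable lborel {..<0} (\<lambda>x. complex_of_real (Gdd x) * Ef \<sigma> \<beta> x)"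
proof (rule set_integrable_bound[OF Gdd_int])
  show "set_borel_measurable lborel {..<0} (\<lambda>x. complex_of_real (Gdd x) * Ef \<sigma> \<beta> x)"
    unfolding set_borel_measurable_def Gdd_def
    using b by (auto intro!: borel_measurable_continuous_on_indicator continuous_at_imp_continuous_on continuous_intros Gd_cont[OF b] Ef_cont[OF b])
  show "AE x in lborel. x \<in> {..<0} \<longrightarrow> norm (complex_of_real (Gdd x) * Ef \<sigma> \<beta> x) \<le> norm (Gdd x)"
  proof (intro AE_I2 impI)
    fix x :: real assume "x \<in> {..<0}"
    then have "norm (Ef \<sigma> \<beta> x) \<le> 1" using Ef_le1[OF b s] by auto
    then show "norm (complex_of_real (Gdd x) * Ef \<sigma> \<beta> x) \<le> norm (Gdd x)"
      by (simp add: norm_mult mult_left_le)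
  qed
qed

end




context
  fixes \<beta> :: real and \<sigma> :: complex
  assumes b: "\<beta> > 0" and s: "Re \<sigma> > 0"
begin

lemma F_int_eq:
  fixes F f :: "real \<Rightarrow> complex"
  assumes D: "\<And>x. (F has_vector_derivative f x) (at x)"
    and C: "\<And>x. isCont f x"
    and I: "set_integrable lborel {..<0} f"
    and A: "(F \<longlongrightarrow> 0) at_bot"
  shows "(LBINT x:{..<0}. f x) = F 0"
proof -
  have cF: "isCont F 0" using D has_vector_derivative_continuous by blast
  have "(LBINT x=-\<infinity>..ereal 0. f x) = F 0 - 0"
  proof (rule interval_integral_FTC_integrable)
    show "((F \<circ> real_of_ereal) \<longlongrightarrow> 0) (at_right (-\<infinity>))"
      unfolding ereal_tendsto_simps1 by (rule A)
    show "((F \<circ> real_of_ereal) \<longlongrightarrow> F 0) (at_left (ereal 0))"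
      unfolding ereal_tendsto_simps1 by (rule at_left_of_cont[OF cF])
    show "set_integrable lborel (einterval (-\<infinity>) (ereal 0)) f" using I by simp
  qed (auto intro: D C)
  then show ?thesis by (simp add: interval_lebesgue_integral_le_eq)
qed

lemma J1: "(LBINT x:{..<0}. complex_of_real (Cd \<beta> x) * Ef \<sigma> \<beta> x) + \<sigma> * (LBINT x:{..<0}. Ef \<sigma> \<beta> x)
    = complex_of_real (Cf \<beta> 0)"
proof -
  let ?F = "\<lambda>x. complex_of_real (Cf \<beta> x) * Ef \<sigma> \<beta> x"
  let ?f = "\<lambda>x. complex_of_real (Cd \<beta> x) * Ef \<sigma> \<beta> x + \<sigma> * Ef \<sigma> \<beta> x"
  have I: "set_integrable lborel {..<0} ?f"
    by (intro set_integral_add(1) CdE_int[OF b s] set_integrable_mult_right Ef_int[OF b s])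
  have "(LBINT x:{..<0}. ?f x) = ?F 0"
  proof (rule F_int_eq[OF _ _ I])
    fix x
    have "(?F has_vector_derivative complex_of_real (Cf \<beta> x) * (\<sigma> / complex_of_real (Cf \<beta> x) * Ef \<sigma> \<beta> x)
        + complex_of_real (Cd \<beta> x) * Ef \<sigma> \<beta> x) (at x)"
      by (rule has_vector_derivative_mult[OF has_vector_derivative_of_real[OF Cf_deriv[OF b]] Ef_deriv[OF b]])
    moreover have "complex_of_real (Cf \<beta> x) * (\<sigma> / complex_of_real (Cf \<beta> x) * Ef \<sigma> \<beta> x)
        + complex_of_real (Cd \<beta> x) * Ef \<sigma> \<beta> x = ?f x"
      using Cf_pos[OF b, of x] by (simp add: field_simps)
    ultimately show "(?F has_vector_derivative ?f x) (at x)" by metis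
    show "isCont ?f x" by (intro continuous_intros Cd_cont[OF b] Ef_cont[OF b])
  next
    show "(?F \<longlongrightarrow> 0) at_bot"
    proof (rule Lim_null_comparison[of _ "Cf \<beta>"])
      show "\<forall>\<^sub>F x in at_bot. norm (?F x) \<le> Cf \<beta> x"
        unfolding eventually_at_bot_linorder
      proof (intro exI[of _ 0] allI impI)
        fix x :: real assume "x \<le> 0"
        then have "norm (Ef \<sigma> \<beta> x) \<le> 1" using Ef_le1[OF b s] by auto
        then show "norm (?F x) \<le> Cf \<beta> x"
          using Cf_pos[OF b, of x] by (simp add: norm_mult mult_left_le)
      qed
      show "(Cf \<beta> \<longlongrightarrow> 0) at_bot" by (rule Cf_bot[OF b])
    qed
  qed
  also have "?F 0 = complex_of_real (Cf \<beta> 0)" by (simp add: Ef_0)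
  finally show ?thesis
    by (subst (asm) set_integral_add(2)[OF CdE_int[OF b s] set_integrable_mult_right[OF Ef_int[OF b s]]]) simp
qed

lemma J2: "complex_of_real (Nn \<beta>) * (LBINT x:{..<0}. complex_of_real (Gdd \<beta> x) * Ef \<sigma> \<beta> x)
    + \<sigma> * (LBINT x:{..<0}. complex_of_real (Cd \<beta> x) * Ef \<sigma> \<beta> x)
    = complex_of_real (Nn \<beta> * Gd \<beta> 0)"
proof -
  let ?F = "\<lambda>x. complex_of_real (Nn \<beta> * Gd \<beta> x) * Ef \<sigma> \<beta> x"
  let ?f = "\<lambda>x. complex_of_real (Nn \<beta>) * (complex_of_real (Gdd \<beta> x) * Ef \<sigma> \<beta> x) + \<sigma> * (complex_of_real (Cd \<beta> x) * Ef \<sigma> \<beta> x)"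
  have I: "set_integrable lborel {..<0} ?f"
    by (intro set_integral_add(1) set_integrable_mult_right CdE_int[OF b s] GddE_int[OF b s])
  have "(LBINT x:{..<0}. ?f x) = ?F 0"
  proof (rule F_int_eq[OF _ _ I])
    fix x
    have dG: "((\<lambda>x. Nn \<beta> * Gd \<beta> x) has_real_derivative Nn \<beta> * Gdd \<beta> x) (at x)"
    proof -
      have "((\<lambda>x. Nn \<beta> * Gd \<beta> x) has_real_derivative Nn \<beta> * (-(x+1)/(2*\<beta>) * Gd \<beta> x)) (at x)"
        by (rule DERIV_cmult[OF Gd_deriv[OF b]])
      moreover have "Nn \<beta> * (-(x+1)/(2*\<beta>) * Gd \<beta> x) = Nn \<beta> * Gdd \<beta> x"
        using b by (simp add: Gdd_def[OF b s] field_simps)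
      ultimately show ?thesis by simp
    qed
    have "(?F has_vector_derivative complex_of_real (Nn \<beta> * Gd \<beta> x) * (\<sigma> / complex_of_real (Cf \<beta> x) * Ef \<sigma> \<beta> x)
        + complex_of_real (Nn \<beta> * Gdd \<beta> x) * Ef \<sigma> \<beta> x) (at x)"
      by (rule has_vector_derivative_mult[OF has_vector_derivative_of_real[OF dG] Ef_deriv[OF b]])
    moreover have "complex_of_real (Nn \<beta> * Gd \<beta> x) * (\<sigma> / complex_of_real (Cf \<beta> x) * Ef \<sigma> \<beta> x)
        + complex_of_real (Nn \<beta> * Gdd \<beta> x) * Ef \<sigma> \<beta> x = ?f x"
      using Cf_pos[OF b, of x] by (simp add: field_simps Cd_def)
    ultimately show "(?F has_vector_derivative ?f x) (at x)" by metis
    show "isCont ?f x" unfolding Gdd_def[OF b s]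
      by (intro continuous_intros Cd_cont[OF b] Ef_cont[OF b] Gd_cont[OF b]) (use b in simp)
  next
    show "(?F \<longlongrightarrow> 0) at_bot"
    proof (rule Lim_null_comparison[of _ "\<lambda>x. Nn \<beta> * Gd \<beta> x"])
      show "\<forall>\<^sub>F x in at_bot. norm (?F x) \<le> Nn \<beta> * Gd \<beta> x"
        unfolding eventually_at_bot_linorder
      proof (intro exI[of _ 0] allI impI)
        fix x :: real assume "x \<le> 0"
        then have "norm (Ef \<sigma> \<beta> x) \<le> 1" using Ef_le1[OF b s] by auto
        moreover have "0 \<le> Nn \<beta> * Gd \<beta> x" using Nn_pos[OF b] Gd_nonneg[of \<beta> x] by simp
        ultimately have "Nn \<beta> * Gd \<beta> x * norm (Ef \<sigma> \<beta> x) \<le> Nn \<beta> * Gd \<beta> x"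
          by (rule mult_left_le)
        then show "norm (?F x) \<le> Nn \<beta> * Gd \<beta> x"
          using Nn_pos[OF b] Gd_nonneg[of \<beta> x] by (simp add: norm_mult abs_mult)
      qed
      show "((\<lambda>x. Nn \<beta> * Gd \<beta> x) \<longlongrightarrow> 0) at_bot" 
        using tendsto_mult_right_zero[OF Gd_bot[OF b], of "Nn \<beta>"] by simp
    qed
  qed
  also have "?F 0 = complex_of_real (Nn \<beta> * Gd \<beta> 0)" by (simp add: Ef_0)
  finally show ?thesis
    by (subst (asm) set_integral_add(2)[OF set_integrable_mult_right[OF GddE_int[OF b s]] set_integrable_mult_right[OF CdE_int[OF b s]]]) simp
qed

end



definition D1 :: "real \<Rightarrow> real \<Rightarrow> real" where
  "D1 \<alpha> \<beta> = (0 * (4 * (1 + erf (1 / (2 * sqrt \<beta>)))) -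
     1 * (4 * (0 + 2 / sqrt pi * exp (- ((1 / (2 * sqrt \<beta>))\<^sup>2)) * (- \<alpha> / (2 * sqrt \<beta>))))) /
     ((4 * (1 + erf (1 / (2 * sqrt \<beta>)))) * (4 * (1 + erf (1 / (2 * sqrt \<beta>)))))"

lemma alg_aux:
  fixes D R E A \<alpha> x \<beta> w :: real
  assumes "\<beta> \<noteq> 0" "w = 1"
  shows "D * R * E + E * (- (of_nat 2 * ((0 + (-\<alpha>)) * (x + w) ^ (2 - Suc 0))) / (4 * \<beta>)) * (A * R)
    = D * (R * E) + (R * E) * A * (\<alpha> * (x + 1) / (2 * \<beta>))"
  using assms by (simp add: field_simps)

lemma fCJ_u_deriv:
  assumes b: "\<beta> > 0"
  shows "((\<lambda>u. fCJ \<alpha> \<beta> x u) has_real_derivative (D1 \<alpha> \<beta> * Gd \<beta> x - \<alpha> * Nn \<beta> * Gdd \<beta> x)) (at 1)"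
proof -
  have dw: "((\<lambda>u. u powr (-\<alpha>)) has_real_derivative (-\<alpha>)) (at 1)"
    using DERIV_fun_powr[OF DERIV_ident, of 1 "-\<alpha>"] by simp
  have dW: "((\<lambda>u. u powr (-\<alpha>) / (2 * sqrt \<beta>)) has_real_derivative (-\<alpha> / (2 * sqrt \<beta>))) (at 1)"
    by (rule DERIV_cdivide[OF dw])
  have dE: "((\<lambda>u. erf (u powr (-\<alpha>) / (2 * sqrt \<beta>))) has_real_derivative
      2 / sqrt pi * exp (- ((1 / (2 * sqrt \<beta>))\<^sup>2)) * (-\<alpha> / (2 * sqrt \<beta>))) (at 1)"
    using DERIV_chain2[OF erf_deriv dW] by simp
  have dden: "((\<lambda>u. 4 * (1 + erf (u powr (-\<alpha>) / (2 * sqrt \<beta>)))) has_real_derivative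
      4 * (0 + 2 / sqrt pi * exp (- ((1 / (2 * sqrt \<beta>))\<^sup>2)) * (-\<alpha> / (2 * sqrt \<beta>)))) (at 1)"
    by (rule DERIV_cmult[OF DERIV_add[OF DERIV_const dE]])
  have nz: "4 * (1 + erf (1 powr (-\<alpha>) / (2 * sqrt \<beta>))) \<noteq> 0"
    using erf_nonneg[of "1 / (2 * sqrt \<beta>)"] b by simp
  have dA: "((\<lambda>u. 1 / (4 * (1 + erf (u powr (-\<alpha>) / (2 * sqrt \<beta>))))) has_real_derivative D1 \<alpha> \<beta>) (at 1)"
    using DERIV_divide[OF DERIV_const[of "1::real"] dden nz] unfolding D1_def by simp
  have dA2: "((\<lambda>u. 1 / (4 * (1 + erf (u powr (-\<alpha>) / (2 * sqrt \<beta>)))) * (1 / sqrt (4 * pi * \<beta>)))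
      has_real_derivative D1 \<alpha> \<beta> * (1 / sqrt (4 * pi * \<beta>))) (at 1)"
    by (rule DERIV_cmult_right[OF dA])
  have ds: "((\<lambda>u. x + u powr (-\<alpha>)) has_real_derivative 0 + (-\<alpha>)) (at 1)"
    by (rule DERIV_add[OF DERIV_const dw])
  have dsq: "((\<lambda>u. (x + u powr (-\<alpha>))^2) has_real_derivative of_nat 2 * ((0 + (-\<alpha>)) * (x + 1 powr (-\<alpha>)) ^ (2 - Suc 0))) (at 1)"
    by (rule DERIV_power[OF ds])
  have dh: "((\<lambda>u. - ((x + u powr (-\<alpha>))\<^sup>2) / (4 * \<beta>)) has_real_derivative
      - (of_nat 2 * ((0 + (-\<alpha>)) * (x + 1 powr (-\<alpha>)) ^ (2 - Suc 0))) / (4 * \<beta>)) (at 1)"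
    by (rule DERIV_cdivide[OF DERIV_minus[OF dsq]])
  have dH: "((\<lambda>u. exp (- ((x + u powr (-\<alpha>))\<^sup>2) / (4 * \<beta>))) has_real_derivative
      exp (- ((x + 1 powr (-\<alpha>))\<^sup>2) / (4 * \<beta>)) * (- (of_nat 2 * ((0 + (-\<alpha>)) * (x + 1 powr (-\<alpha>)) ^ (2 - Suc 0))) / (4 * \<beta>))) (at 1)"
    by (rule DERIV_fun_exp[OF dh])
  have dF: "((\<lambda>u. fCJ \<alpha> \<beta> x u) has_real_derivative
      D1 \<alpha> \<beta> * (1 / sqrt (4 * pi * \<beta>)) * exp (- ((x + 1 powr (-\<alpha>))\<^sup>2) / (4 * \<beta>))
      + exp (- ((x + 1 powr (-\<alpha>))\<^sup>2) / (4 * \<beta>)) * (- (of_nat 2 * ((0 + (-\<alpha>)) * (x + 1 powr (-\<alpha>)) ^ (2 - Suc 0))) / (4 * \<beta>))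
        * (1 / (4 * (1 + erf (1 powr (-\<alpha>) / (2 * sqrt \<beta>)))) * (1 / sqrt (4 * pi * \<beta>)))) (at 1)"
    unfolding fCJ_def by (rule DERIV_mult[OF dA2 dH])
  have e1: "(1 / sqrt (4 * pi * \<beta>)) * exp (- ((x + 1 powr (-\<alpha>))\<^sup>2) / (4 * \<beta>)) = Gd \<beta> x"
    using b by (simp add: Gd_eq)
  have e2: "1 / (4 * (1 + erf (1 powr (-\<alpha>) / (2 * sqrt \<beta>)))) = Nn \<beta>"
    by (simp add: Nn_def)
  have "D1 \<alpha> \<beta> * (1 / sqrt (4 * pi * \<beta>)) * exp (- ((x + 1 powr (-\<alpha>))\<^sup>2) / (4 * \<beta>))
      + exp (- ((x + 1 powr (-\<alpha>))\<^sup>2) / (4 * \<beta>)) * (- (of_nat 2 * ((0 + (-\<alpha>)) * (x + 1 powr (-\<alpha>)) ^ (2 - Suc 0))) / (4 * \<beta>))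
        * (1 / (4 * (1 + erf (1 powr (-\<alpha>) / (2 * sqrt \<beta>)))) * (1 / sqrt (4 * pi * \<beta>)))
    = D1 \<alpha> \<beta> * ((1 / sqrt (4 * pi * \<beta>)) * exp (- ((x + 1 powr (-\<alpha>))\<^sup>2) / (4 * \<beta>)))
      + ((1 / sqrt (4 * pi * \<beta>)) * exp (- ((x + 1 powr (-\<alpha>))\<^sup>2) / (4 * \<beta>))) * 
        (1 / (4 * (1 + erf (1 powr (-\<alpha>) / (2 * sqrt \<beta>))))) * (\<alpha> * (x + 1) / (2 * \<beta>))"
    by (rule alg_aux) (use b in simp_all)
  also have "\<dots> = D1 \<alpha> \<beta> * Gd \<beta> x + Gd \<beta> x * Nn \<beta> * (\<alpha> * (x + 1) / (2 * \<beta>))"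
    unfolding e1 e2 ..
  also have "\<dots> = D1 \<alpha> \<beta> * Gd \<beta> x - \<alpha> * Nn \<beta> * Gdd \<beta> x"
    using b by (simp add: Gdd_def[OF b, of 1] field_simps)
  finally show ?thesis using dF by simp
qed

lemma b0_eq: "\<beta> > 0 \<Longrightarrow> b0CJ \<alpha> \<beta> \<xi> = D1 \<alpha> \<beta> * Gd \<beta> \<xi> - \<alpha> * Nn \<beta> * Gdd \<beta> \<xi> + Cd \<beta> \<xi> / 2"
  unfolding b0CJ_def using DERIV_imp_deriv[OF fCJ_u_deriv]
  by (simp add: fCJ_1 c0_eq Cd_def)



definition KK :: "complex \<Rightarrow> real \<Rightarrow> complex" where "KK \<sigma> \<beta> = (LBINT x:{..<0}. Ef \<sigma> \<beta> x)"
definition XX :: "complex \<Rightarrow> real \<Rightarrow> complex" where "XX \<sigma> \<beta> = (LBINT x:{..<0}. complex_of_real (Gd \<beta> x) * Ef \<sigma> \<beta> x)"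

lemma alg2:
  fixes n Yi \<sigma> Zi G0 C0 K F d X a :: complex
  assumes h1: "n * Yi + \<sigma> * Zi = G0" and h2: "Zi = C0 - \<sigma> * K"
    and h3: "F = d * X - a * n * Yi + inverse 2 * Zi - C0"
  shows "F = d * X - a * (G0 - \<sigma> * (C0 - \<sigma> * K)) + (C0 - \<sigma> * K) / 2 - C0"
proof -
  have e: "n * Yi = G0 - \<sigma> * Zi" using h1 by (simp add: eq_diff_eq)
  have "F = d * X - a * (n * Yi) + inverse 2 * Zi - C0" using h3 by (simp add: mult.assoc)
  then show ?thesis unfolding e h2 by (simp add: field_simps)
qed

lemma FCJ_formula:
  assumes b: "\<beta> > 0" and s: "Re \<sigma> > 0"
  shows "FCJ \<alpha> \<beta> \<sigma> = complex_of_real (D1 \<alpha> \<beta>) * XX \<sigma> \<beta>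
     - complex_of_real \<alpha> * (complex_of_real (Nn \<beta> * Gd \<beta> 0) - \<sigma> * (complex_of_real (Cf \<beta> 0) - \<sigma> * KK \<sigma> \<beta>))
     + (complex_of_real (Cf \<beta> 0) - \<sigma> * KK \<sigma> \<beta>) / 2 - complex_of_real (Cf \<beta> 0)"
proof -
  define g where "g = (\<lambda>x. complex_of_real (D1 \<alpha> \<beta> * Gd \<beta> x - \<alpha> * Nn \<beta> * Gdd \<beta> x + Cd \<beta> x / 2) * Ef \<sigma> \<beta> x)"
  have geq: "(\<lambda>\<xi>. complex_of_real (b0CJ \<alpha> \<beta> \<xi>) * exp (- \<sigma> * complex_of_real (pCJ \<alpha> \<beta> \<xi>))) = g"
    unfolding g_def by (auto simp: b0_eq[OF b] p_eq[OF b] Ef_def)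
  have gm0: "g \<in> borel_measurable borel"
    unfolding g_def Gdd_def[OF b s, abs_def]
    by (rule borel_measurable_continuous_onI)
       (use b in \<open>auto intro!: continuous_at_imp_continuous_on continuous_intros Gd_cont Cd_cont Ef_cont\<close>)
  have gm: "g \<in> borel_measurable lborel" using gm0 by simp
  have "(LBINT \<xi>:{..0}. g \<xi>) = (LBINT \<xi>:{..<0}. g \<xi>)"
    unfolding set_lebesgue_integral_def
  proof (rule integral_cong_AE)
    show "AE x in lborel. indicat_real {..0} x *\<^sub>R g x = indicat_real {..<0} x *\<^sub>R g x"
      using AE_lborel_singleton[of "0::real"] by eventually_elim (auto simp: indicator_def)
  qed (use gm in auto)
  define a1 where "a1 = (\<lambda>x. complex_of_real (D1 \<alpha> \<beta>) * (complex_of_real (Gd \<beta> x) * Ef \<sigma> \<beta> x))"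
  define a2 where "a2 = (\<lambda>x. complex_of_real (\<alpha> * Nn \<beta>) * (complex_of_real (Gdd \<beta> x) * Ef \<sigma> \<beta> x))"
  define a3 where "a3 = (\<lambda>x. inverse 2 * (complex_of_real (Cd \<beta> x) * Ef \<sigma> \<beta> x))"
  have i1: "set_integrable lborel {..<0} a1" unfolding a1_def by (intro set_integrable_mult_right GdE_int[OF b s])
  have i2: "set_integrable lborel {..<0} a2" unfolding a2_def by (intro set_integrable_mult_right GddE_int[OF b s])
  have i3: "set_integrable lborel {..<0} a3" unfolding a3_def by (intro set_integrable_mult_right CdE_int[OF b s])
  have "g = (\<lambda>x. a1 x - a2 x + a3 x)"
    unfolding g_def a1_def a2_def a3_def by (auto simp: algebra_simps)
  then have "(LBINT \<xi>:{..<0}. g \<xi>) = (LBINT x:{..<0}. a1 x) - (LBINT x:{..<0}. a2 x) + (LBINT x:{..<0}. a3 x)"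
    using set_integral_add(2)[OF set_integral_diff(1)[OF i1 i2] i3] set_integral_diff(2)[OF i1 i2] by simp
  also have "\<dots> = complex_of_real (D1 \<alpha> \<beta>) * XX \<sigma> \<beta>
      - complex_of_real (\<alpha> * Nn \<beta>) * (LBINT x:{..<0}. complex_of_real (Gdd \<beta> x) * Ef \<sigma> \<beta> x)
      + inverse 2 * (LBINT x:{..<0}. complex_of_real (Cd \<beta> x) * Ef \<sigma> \<beta> x)"
    unfolding a1_def a2_def a3_def XX_def by simp
  finally have F1: "FCJ \<alpha> \<beta> \<sigma> = complex_of_real (D1 \<alpha> \<beta>) * XX \<sigma> \<beta>
      - complex_of_real \<alpha> * complex_of_real (Nn \<beta>) * (LBINT x:{..<0}. complex_of_real (Gdd \<beta> x) * Ef \<sigma> \<beta> x)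
      + inverse 2 * (LBINT x:{..<0}. complex_of_real (Cd \<beta> x) * Ef \<sigma> \<beta> x) - complex_of_real (Cf \<beta> 0)"
    unfolding FCJ_def geq c0_eq[OF b] using \<open>(LBINT \<xi>:{..0}. g \<xi>) = (LBINT \<xi>:{..<0}. g \<xi>)\<close> by simp
  have Z: "(LBINT x:{..<0}. complex_of_real (Cd \<beta> x) * Ef \<sigma> \<beta> x) = complex_of_real (Cf \<beta> 0) - \<sigma> * KK \<sigma> \<beta>"
    using J1[OF b s] unfolding KK_def by (simp add: algebra_simps)
  show ?thesis
    by (rule alg2[OF J2[OF b s] Z F1])
qed



lemma ev_pos: "\<forall>\<^sub>F \<beta> in at_right (0::real). \<beta> > 0"
  by (simp add: eventually_at_right_less)

lemma Q_lim_small: "x < -1 \<Longrightarrow> ((\<lambda>\<beta>. Q \<beta> x) \<longlongrightarrow> 0) (at_right 0)"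
proof (rule tendsto_sandwich[of "\<lambda>_. 0" _ _ "\<lambda>\<beta>. 2*\<beta>/(x+1)\<^sup>2"])
  assume x: "x < -1"
  show "\<forall>\<^sub>F \<beta> in at_right 0. 0 \<le> Q \<beta> x" by (simp add: Q_nonneg)
  show "\<forall>\<^sub>F \<beta> in at_right 0. Q \<beta> x \<le> 2*\<beta>/(x+1)\<^sup>2"
    using ev_pos by eventually_elim (rule Q_small[OF _ x])
  have "((\<lambda>\<beta>. 2*\<beta>/(x+1)\<^sup>2) \<longlongrightarrow> 2*0/(x+1)\<^sup>2) (at_right 0)"
    by (intro tendsto_intros) (use x in simp)
  then show "((\<lambda>\<beta>. 2*\<beta>/(x+1)\<^sup>2) \<longlongrightarrow> 0) (at_right 0)" by simp
qed simp

lemma Q_lim_large: "x > -1 \<Longrightarrow> ((\<lambda>\<beta>. Q \<beta> x) \<longlongrightarrow> 1) (at_right 0)"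
proof (rule tendsto_sandwich[of "\<lambda>\<beta>. 1 - 2*\<beta>/(x+1)\<^sup>2" _ _ "\<lambda>_. 1"])
  assume x: "x > -1"
  show "\<forall>\<^sub>F \<beta> in at_right 0. Q \<beta> x \<le> 1"
    using ev_pos by eventually_elim (rule Q_le1)
  show "\<forall>\<^sub>F \<beta> in at_right 0. 1 - 2*\<beta>/(x+1)\<^sup>2 \<le> Q \<beta> x"
    using ev_pos by eventually_elim (rule Q_large[OF _ x])
  have "((\<lambda>\<beta>. 1 - 2*\<beta>/(x+1)\<^sup>2) \<longlongrightarrow> 1 - 2*0/(x+1)\<^sup>2) (at_right 0)"
    by (intro tendsto_intros) (use x in simp)
  then show "((\<lambda>\<beta>. 1 - 2*\<beta>/(x+1)\<^sup>2) \<longlongrightarrow> 1) (at_right 0)" by simp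
qed simp

lemma Cf_lim_small: "x < -1 \<Longrightarrow> ((\<lambda>\<beta>. Cf \<beta> x) \<longlongrightarrow> 0) (at_right 0)"
proof -
  assume x: "x < -1"
  have "((\<lambda>\<beta>. sqrt (2 * Nn \<beta> * Q \<beta> x)) \<longlongrightarrow> sqrt (2 * (1/8) * 0)) (at_right 0)"
    by (intro tendsto_intros Nn_tendsto Q_lim_small x)
  then show ?thesis unfolding Cf_def by simp
qed

lemma sqrt_quarter: "sqrt (1/4) = (1/2::real)"
  by (rule real_sqrt_unique) (auto simp: power2_eq_square)

lemma Cf_lim_large: "x > -1 \<Longrightarrow> ((\<lambda>\<beta>. Cf \<beta> x) \<longlongrightarrow> 1/2) (at_right 0)"
proof -
  assume x: "x > -1"
  have "((\<lambda>\<beta>. sqrt (2 * Nn \<beta> * Q \<beta> x)) \<longlongrightarrow> sqrt (2 * (1/8) * 1)) (at_right 0)"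
    by (intro tendsto_intros Nn_tendsto Q_lim_large x)
  then show ?thesis unfolding Cf_def using sqrt_quarter by simp
qed

lemma Pf_lim: 
  assumes x: "-1 < \<xi>" "\<xi> \<le> 0"
  shows "((\<lambda>\<beta>. Pf \<beta> \<xi>) \<longlongrightarrow> -2*\<xi>) (at_right 0)"
proof (rule tendsto_sandwich[of "\<lambda>\<beta>. - \<xi> / Cf \<beta> 0" _ _ "\<lambda>\<beta>. - \<xi> / Cf \<beta> \<xi>"])
  show "\<forall>\<^sub>F \<beta> in at_right 0. - \<xi> / Cf \<beta> 0 \<le> Pf \<beta> \<xi>"
    using ev_pos by eventually_elim (rule Pf_lower0[OF _ x(2)])
  show "\<forall>\<^sub>F \<beta> in at_right 0. Pf \<beta> \<xi> \<le> - \<xi> / Cf \<beta> \<xi>"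
    using ev_pos by eventually_elim (rule Pf_upper[OF _ x(2)])
  have "((\<lambda>\<beta>. - \<xi> / Cf \<beta> 0) \<longlongrightarrow> - \<xi> / (1/2)) (at_right 0)"
    by (intro tendsto_intros Cf_lim_large) auto
  then show "((\<lambda>\<beta>. - \<xi> / Cf \<beta> 0) \<longlongrightarrow> -2*\<xi>) (at_right 0)" by (simp add: mult.commute)
  have "((\<lambda>\<beta>. - \<xi> / Cf \<beta> \<xi>) \<longlongrightarrow> - \<xi> / (1/2)) (at_right 0)"
    by (intro tendsto_intros Cf_lim_large) (use x in auto)
  then show "((\<lambda>\<beta>. - \<xi> / Cf \<beta> \<xi>) \<longlongrightarrow> -2*\<xi>) (at_right 0)" by (simp add: mult.commute)
qed

lemma Ef_lim_large:
  assumes x: "-1 < \<xi>" "\<xi> \<le> 0"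
  shows "((\<lambda>\<beta>. Ef \<sigma> \<beta> \<xi>) \<longlongrightarrow> exp (2 * \<sigma> * complex_of_real \<xi>)) (at_right 0)"
proof -
  have "((\<lambda>\<beta>. exp (- \<sigma> * complex_of_real (Pf \<beta> \<xi>))) \<longlongrightarrow> exp (- \<sigma> * complex_of_real (-2*\<xi>))) (at_right 0)"
    by (intro tendsto_intros Pf_lim x)
  then show ?thesis unfolding Ef_def by (simp add: mult.assoc mult.left_commute)
qed

lemma Ef_lim_small:
  assumes x: "\<xi> < -1" and s: "Re \<sigma> > 0"
  shows "((\<lambda>\<beta>. Ef \<sigma> \<beta> \<xi>) \<longlongrightarrow> 0) (at_right 0)"
proof -
  define m where "m = (\<xi> - 1) / 2"
  have m: "\<xi> \<le> m" "m \<le> 0" "m < -1" using x unfolding m_def by auto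
  have c: "Re \<sigma> * (m - \<xi>) > 0" using s x unfolding m_def by simp
  have ep: "\<forall>\<^sub>F \<beta> in at_right 0. Cf \<beta> m > 0"
    using ev_pos by eventually_elim (rule Cf_pos)
  have "filterlim (\<lambda>\<beta>. Cf \<beta> m) (at_right 0) (at_right 0)"
    by (rule tendsto_imp_filterlim_at_right[OF Cf_lim_small[OF m(3)] ep])
  moreover have "filterlim (\<lambda>y. Re \<sigma> * (m - \<xi>) / y) at_top (at_right 0)"
    using c by (intro filterlim_tendsto_pos_mult_at_top[OF tendsto_const c filterlim_inverse_at_top_right, unfolded divide_inverse[symmetric]])
  ultimately have "filterlim (\<lambda>\<beta>. Re \<sigma> * (m - \<xi>) / Cf \<beta> m) at_top (at_right 0)"
    by (rule filterlim_compose[rotated])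
  then have "filterlim (\<lambda>\<beta>. - (Re \<sigma> * (m - \<xi>) / Cf \<beta> m)) at_bot (at_right 0)"
    by (simp add: filterlim_uminus_at_bot)
  then have lim: "((\<lambda>\<beta>. exp (- (Re \<sigma> * (m - \<xi>) / Cf \<beta> m))) \<longlongrightarrow> 0) (at_right 0)"
    by (rule filterlim_compose[OF exp_at_bot])
  show ?thesis
  proof (rule Lim_null_comparison[OF _ lim])
    show "\<forall>\<^sub>F \<beta> in at_right 0. norm (Ef \<sigma> \<beta> \<xi>) \<le> exp (- (Re \<sigma> * (m - \<xi>) / Cf \<beta> m))"
      using ev_pos
    proof eventually_elim
      fix \<beta> :: real assume b: "\<beta> > 0"
      have "(m - \<xi>) / Cf \<beta> m \<le> Pf \<beta> \<xi>" by (rule Pf_lower2[OF b m(1,2)])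
      then have "Re \<sigma> * ((m - \<xi>) / Cf \<beta> m) \<le> Re \<sigma> * Pf \<beta> \<xi>"
        using s by (intro mult_left_mono) auto
      then show "norm (Ef \<sigma> \<beta> \<xi>) \<le> exp (- (Re \<sigma> * (m - \<xi>) / Cf \<beta> m))"
        unfolding norm_Ef by simp
    qed
  qed
qed



lemma exp_seg_integral:
  assumes s: "\<sigma> \<noteq> 0"
  shows "(LBINT x:{-1<..<0::real}. exp (2 * \<sigma> * complex_of_real x)) = (1 - exp (- 2 * \<sigma>)) / (2 * \<sigma>)"
proof -
  have D: "((\<lambda>x. exp (2 * \<sigma> * complex_of_real x) / (2 * \<sigma>)) has_vector_derivative exp (2 * \<sigma> * complex_of_real x))
      (at x within {min (-1) 0..max (-1) 0})" for x :: real
  proof -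
    have "((\<lambda>z. exp (2 * \<sigma> * z) / (2 * \<sigma>)) has_field_derivative exp (2 * \<sigma> * complex_of_real x) * (2 * \<sigma> * 1) / (2 * \<sigma>)) (at (complex_of_real x))"
      by (intro DERIV_cdivide DERIV_fun_exp DERIV_cmult DERIV_ident)
    then have "((\<lambda>z. exp (2 * \<sigma> * z) / (2 * \<sigma>)) has_field_derivative exp (2 * \<sigma> * complex_of_real x)) (at (complex_of_real x))"
      using s by simp
    then show ?thesis by (rule has_vector_derivative_real_field)
  qed
  have "(LBINT x=ereal (-1)..ereal 0. exp (2 * \<sigma> * complex_of_real x))
      = exp (2 * \<sigma> * complex_of_real 0) / (2 * \<sigma>) - exp (2 * \<sigma> * complex_of_real (-1)) / (2 * \<sigma>)"
    by (rule interval_integral_FTC_finite[OF _ D]) (intro continuous_intros)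
  moreover have "(LBINT x=ereal (-1)..ereal 0. exp (2 * \<sigma> * complex_of_real x)) = (LBINT x:{-1<..<0::real}. exp (2 * \<sigma> * complex_of_real x))"
  proof -
    have le: "ereal (-1) \<le> ereal 0" by simp
    show ?thesis unfolding interval_lebesgue_integral_le_eq[OF le] einterval_eq_Icc ..
  qed
  ultimately show ?thesis by (simp add: diff_divide_distrib)
qed

lemma KK_lim:
  assumes s: "Re \<sigma> > 0"
  shows "((\<lambda>\<beta>. KK \<sigma> \<beta>) \<longlongrightarrow> (1 - exp (- 2 * \<sigma>)) / (2 * \<sigma>)) (at_right 0)"
proof -
  have sn: "\<sigma> \<noteq> 0" using s by auto
  define f where "f = (\<lambda>x::real. indicator {-1<..<0} x *\<^sub>R exp (2 * \<sigma> * complex_of_real x))"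
  define w where "w = (\<lambda>x::real. indicator {..<0} x *\<^sub>R exp (Re \<sigma> * x))"
  have intf: "integral\<^sup>L lborel f = (1 - exp (- 2 * \<sigma>)) / (2 * \<sigma>)"
    using exp_seg_integral[OF sn] unfolding f_def set_lebesgue_integral_def by simp
  have KKe: "KK \<sigma> \<beta> = integral\<^sup>L lborel (\<lambda>x. indicator {..<0} x *\<^sub>R Ef \<sigma> \<beta> x)" for \<beta>
    unfolding KK_def set_lebesgue_integral_def ..
  have fm: "f \<in> borel_measurable lborel"
    unfolding f_def measurable_lborel2 by (rule borel_measurable_continuous_on_indicator) (auto intro!: continuous_intros)
  have wi: "integrable lborel w"
    using exp_int[OF s] unfolding w_def set_integrable_def .
  have "((\<lambda>\<beta>. integral\<^sup>L lborel (\<lambda>x. indicator {..<0} x *\<^sub>R Ef \<sigma> \<beta> x)) \<longlongrightarrow> integral\<^sup>L lborel f) (at 0 within {0<..})"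
    unfolding tendsto_at_iff_sequentially o_def
  proof (intro allI impI)
    fix X :: "nat \<Rightarrow> real" assume X: "\<forall>i. X i \<in> {0<..} - {0}" "X \<longlonglongrightarrow> 0"
    have Xp: "\<And>i. X i > 0" using X(1) by auto
    have Xf: "filterlim X (at_right 0) sequentially"
      by (rule tendsto_imp_filterlim_at_right[OF X(2)]) (simp add: Xp)
    show "(\<lambda>i. integral\<^sup>L lborel (\<lambda>x. indicator {..<0} x *\<^sub>R Ef \<sigma> (X i) x)) \<longlonglongrightarrow> integral\<^sup>L lborel f"
    proof (rule integral_dominated_convergence[OF fm _ wi])
      fix i
      show "(\<lambda>x. indicator {..<0} x *\<^sub>R Ef \<sigma> (X i) x) \<in> borel_measurable lborel"
        unfolding measurable_lborel2 by (rule borel_measurable_continuous_on_indicator) 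
           (auto intro!: continuous_at_imp_continuous_on Ef_cont Xp)
      show "AE x in lborel. norm (indicator {..<0} x *\<^sub>R Ef \<sigma> (X i) x) \<le> w x"
      proof (rule AE_I2)
        fix x :: real
        show "norm (indicator {..<0} x *\<^sub>R Ef \<sigma> (X i) x) \<le> w x"
          using Ef_bound[OF Xp s, of x] unfolding w_def by (auto simp: indicator_def)
      qed
    next
      show "AE x in lborel. (\<lambda>i. indicator {..<0} x *\<^sub>R Ef \<sigma> (X i) x) \<longlonglongrightarrow> f x"
        using AE_lborel_singleton[of "-1::real"]
      proof eventually_elim
        fix x :: real assume x: "x \<noteq> -1"
        consider "x \<ge> 0" | "-1 < x \<and> x < 0" | "x < -1" using x by linarith
        then show "(\<lambda>i. indicator {..<0} x *\<^sub>R Ef \<sigma> (X i) x) \<longlonglongrightarrow> f x"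
        proof cases
          case 1 then show ?thesis unfolding f_def by (simp add: indicator_def)
        next
          case 2
          have "(\<lambda>i. Ef \<sigma> (X i) x) \<longlonglongrightarrow> exp (2 * \<sigma> * complex_of_real x)"
            by (rule filterlim_compose[OF Ef_lim_large Xf]) (use 2 in auto)
          then show ?thesis using 2 unfolding f_def by (simp add: indicator_def)
        next
          case 3
          have "(\<lambda>i. Ef \<sigma> (X i) x) \<longlonglongrightarrow> 0"
            by (rule filterlim_compose[OF Ef_lim_small[OF 3 s] Xf])
          then show ?thesis using 3 unfolding f_def by (simp add: indicator_def)
        qed
      qed
    qed
  qed
  then show ?thesis unfolding KKe intf .
qed



lemma XX_bound:
  assumes b: "\<beta> > 0" and s: "Re \<sigma> > 0"
  shows "norm (XX \<sigma> \<beta>) \<le> 1"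
proof -
  have "norm (XX \<sigma> \<beta>) \<le> (LBINT x:{..<0}. norm (complex_of_real (Gd \<beta> x) * Ef \<sigma> \<beta> x))"
    unfolding XX_def by (rule set_integral_norm_bound[OF GdE_int[OF b s]])
  also have "\<dots> \<le> (LBINT x:{..<0}. Gd \<beta> x)"
  proof (rule set_integral_mono[OF set_integrable_norm[OF GdE_int[OF b s]] Gd_set_int[OF b]])
    fix x :: real assume "x \<in> {..<0}"
    then have "norm (Ef \<sigma> \<beta> x) \<le> 1" using Ef_le1[OF b s] by auto
    then have "Gd \<beta> x * norm (Ef \<sigma> \<beta> x) \<le> Gd \<beta> x"
      by (rule mult_left_le[OF _ Gd_nonneg])
    then show "norm (complex_of_real (Gd \<beta> x) * Ef \<sigma> \<beta> x) \<le> Gd \<beta> x"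
      using Gd_nonneg[of \<beta> x] by (simp add: norm_mult)
  qed simp
  also have "\<dots> \<le> (LBINT x:UNIV. Gd \<beta> x)" by (rule Q_le_int[OF b]) auto
  also have "\<dots> = 1" using Gd_total[OF b] by (simp add: set_lebesgue_integral_def)
  finally show ?thesis .
qed

lemma alg3:
  fixes a e \<alpha> c d :: real
  assumes "c \<noteq> 0" "d \<noteq> 0"
  shows "(0 * d - 1 * (4 * (0 + a * e * (- \<alpha> / c)))) / (d * d) = 4 * a * \<alpha> * (e / c) / (d * d)"
  using assms by (simp add: field_simps)

lemma D1_lim: "((\<lambda>\<beta>. D1 \<alpha> \<beta>) \<longlongrightarrow> 0) (at_right 0)"
proof -
  define den where "den = (\<lambda>\<beta>::real. 4 * (1 + erf (1 / (2 * sqrt \<beta>))))"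
  have ev: "\<forall>\<^sub>F \<beta> in at_right 0. D1 \<alpha> \<beta> = 4 * (2 / sqrt pi) * \<alpha> * (exp (- ((1 / (2 * sqrt \<beta>))\<^sup>2)) / (2 * sqrt \<beta>)) / (den \<beta> * den \<beta>)"
    using ev_pos
  proof eventually_elim
    fix \<beta> :: real assume b: "\<beta> > 0"
    have nz: "4 * (1 + erf (1 / (2 * sqrt \<beta>))) \<noteq> 0" using erf_nonneg[of "1 / (2 * sqrt \<beta>)"] b by simp
    show "D1 \<alpha> \<beta> = 4 * (2 / sqrt pi) * \<alpha> * (exp (- ((1 / (2 * sqrt \<beta>))\<^sup>2)) / (2 * sqrt \<beta>)) / (den \<beta> * den \<beta>)"
      unfolding D1_def den_def by (rule alg3[OF _ nz]) (use b in simp)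
  qed
  have "filterlim (\<lambda>\<beta>::real. 1 / (2 * sqrt \<beta>)) at_top (at_right 0)"
    by real_asymp
  then have "((\<lambda>\<beta>. erf (1 / (2 * sqrt \<beta>))) \<longlongrightarrow> 1) (at_right 0)"
    using erf_tendsto filterlim_compose by blast
  then have dl: "(den \<longlongrightarrow> 4 * (1 + 1)) (at_right 0)"
    unfolding den_def by (intro tendsto_intros)
  have el: "((\<lambda>\<beta>::real. exp (- ((1 / (2 * sqrt \<beta>))\<^sup>2)) / (2 * sqrt \<beta>)) \<longlongrightarrow> 0) (at_right 0)"
    by real_asymp
  have "((\<lambda>\<beta>. 4 * (2 / sqrt pi) * \<alpha> * (exp (- ((1 / (2 * sqrt \<beta>))\<^sup>2)) / (2 * sqrt \<beta>)) / (den \<beta> * den \<beta>))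
      \<longlongrightarrow> 4 * (2 / sqrt pi) * \<alpha> * 0 / ((4 * (1 + 1)) * (4 * (1 + 1)))) (at_right 0)"
    by (intro tendsto_intros el dl) simp
  then have "((\<lambda>\<beta>. 4 * (2 / sqrt pi) * \<alpha> * (exp (- ((1 / (2 * sqrt \<beta>))\<^sup>2)) / (2 * sqrt \<beta>)) / (den \<beta> * den \<beta>))
      \<longlongrightarrow> 0) (at_right 0)" by simp
  then show ?thesis using tendsto_cong[OF ev] by simp
qed

lemma Gd0_lim: "((\<lambda>\<beta>. Gd \<beta> 0) \<longlongrightarrow> 0) (at_right 0)"
proof -
  have ev: "\<forall>\<^sub>F \<beta> in at_right 0. Gd \<beta> 0 = 1 / sqrt (4 * pi * \<beta>) * exp (- 1 / (4 * \<beta>))"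
    using ev_pos by eventually_elim (rule Gd_at0)
  have "((\<lambda>\<beta>::real. 1 / sqrt (4 * pi * \<beta>) * exp (- 1 / (4 * \<beta>))) \<longlongrightarrow> 0) (at_right 0)"
    by real_asymp
  then show ?thesis using tendsto_cong[OF ev] by simp
qed

lemma alg4:
  fixes a \<sigma> E :: complex
  assumes "\<sigma> \<noteq> 0"
  shows "0 - a * (0 - \<sigma> * (1/2 - \<sigma> * ((1 - E) / (2 * \<sigma>)))) + (1/2 - \<sigma> * ((1 - E) / (2 * \<sigma>))) / 2 - 1/2
    = (a * \<sigma> / 2 + 1/4) * E - 1/2"
  using assms by (simp add: field_simps)

lemma iff_part:
  fixes a \<sigma> :: complex
  shows "(a * \<sigma> / 2 + 1/4) * exp (- 2 * \<sigma>) - 1/2 = 0 \<longleftrightarrow> exp (2 * \<sigma>) = a * \<sigma> + 1/2"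
proof -
  have E: "exp (- 2 * \<sigma>) = inverse (exp (2 * \<sigma>))" by (simp add: exp_minus[symmetric])
  have nz: "exp (2 * \<sigma>) \<noteq> 0" by simp
  show ?thesis unfolding E using nz
    apply (auto simp: field_simps)
     apply algebra
    apply algebra
    done
qed

theorem mainTheorem5:
  fixes \<alpha> :: real and \<sigma> :: complex
  assumes "\<alpha> \<ge> 0" and "Re \<sigma> > 0"
  shows "((\<lambda>\<beta>. FCJ \<alpha> \<beta> \<sigma>) \<longlongrightarrow>
            (complex_of_real \<alpha> * \<sigma> / 2 + 1/4) * exp (- 2 * \<sigma>) - 1/2) (at_right 0)
     \<and> ((complex_of_real \<alpha> * \<sigma> / 2 + 1/4) * exp (- 2 * \<sigma>) - 1/2 = 0
           \<longleftrightarrow> exp (2 * \<sigma>) = complex_of_real \<alpha> * \<sigma> + 1/2)"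
proof
  have s: "Re \<sigma> > 0" by fact
  have sn: "\<sigma> \<noteq> 0" using s by auto
  define L where "L = (1 - exp (- 2 * \<sigma>)) / (2 * \<sigma>)"
  have ev: "\<forall>\<^sub>F \<beta> in at_right 0. FCJ \<alpha> \<beta> \<sigma> = complex_of_real (D1 \<alpha> \<beta>) * XX \<sigma> \<beta>
     - complex_of_real \<alpha> * (complex_of_real (Nn \<beta> * Gd \<beta> 0) - \<sigma> * (complex_of_real (Cf \<beta> 0) - \<sigma> * KK \<sigma> \<beta>))
     + (complex_of_real (Cf \<beta> 0) - \<sigma> * KK \<sigma> \<beta>) / 2 - complex_of_real (Cf \<beta> 0)"
    using ev_pos by eventually_elim (rule FCJ_formula[OF _ s])
  have t1: "((\<lambda>\<beta>. complex_of_real (D1 \<alpha> \<beta>) * XX \<sigma> \<beta>) \<longlongrightarrow> 0) (at_right 0)"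
  proof (rule Lim_null_comparison[of _ "\<lambda>\<beta>. \<bar>D1 \<alpha> \<beta>\<bar>"])
    show "\<forall>\<^sub>F \<beta> in at_right 0. norm (complex_of_real (D1 \<alpha> \<beta>) * XX \<sigma> \<beta>) \<le> \<bar>D1 \<alpha> \<beta>\<bar>"
      using ev_pos
    proof eventually_elim
      fix \<beta> :: real assume b: "\<beta> > 0"
      have "\<bar>D1 \<alpha> \<beta>\<bar> * norm (XX \<sigma> \<beta>) \<le> \<bar>D1 \<alpha> \<beta>\<bar>"
        by (rule mult_left_le[OF XX_bound[OF b s]]) simp
      then show "norm (complex_of_real (D1 \<alpha> \<beta>) * XX \<sigma> \<beta>) \<le> \<bar>D1 \<alpha> \<beta>\<bar>" by (simp add: norm_mult)
    qed
    show "((\<lambda>\<beta>. \<bar>D1 \<alpha> \<beta>\<bar>) \<longlongrightarrow> 0) (at_right 0)"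
      using tendsto_rabs[OF D1_lim[of \<alpha>]] by simp
  qed
  have t2: "((\<lambda>\<beta>. complex_of_real (Nn \<beta> * Gd \<beta> 0)) \<longlongrightarrow> complex_of_real (1/8 * 0)) (at_right 0)"
    by (intro tendsto_intros Nn_tendsto Gd0_lim)
  have t3: "((\<lambda>\<beta>. complex_of_real (Cf \<beta> 0)) \<longlongrightarrow> complex_of_real (1/2)) (at_right 0)"
    by (intro tendsto_intros Cf_lim_large) simp
  have c0l: "((\<lambda>\<beta>. Cf \<beta> 0) \<longlongrightarrow> 1/2) (at_right 0)" by (rule Cf_lim_large) simp
  have t4: "((\<lambda>\<beta>. KK \<sigma> \<beta>) \<longlongrightarrow> L) (at_right 0)"
    unfolding L_def by (rule KK_lim[OF s])
  have "((\<lambda>\<beta>. complex_of_real (D1 \<alpha> \<beta>) * XX \<sigma> \<beta>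
     - complex_of_real \<alpha> * (complex_of_real (Nn \<beta> * Gd \<beta> 0) - \<sigma> * (complex_of_real (Cf \<beta> 0) - \<sigma> * KK \<sigma> \<beta>))
     + (complex_of_real (Cf \<beta> 0) - \<sigma> * KK \<sigma> \<beta>) / 2 - complex_of_real (Cf \<beta> 0))
     \<longlongrightarrow> 0 - complex_of_real \<alpha> * (complex_of_real (1/8 * 0) - \<sigma> * (complex_of_real (1/2) - \<sigma> * L))
     + (complex_of_real (1/2) - \<sigma> * L) / 2 - complex_of_real (1/2)) (at_right 0)"
    using c0l by (intro tendsto_intros t1 t2 t3 t4 Nn_tendsto Gd0_lim c0l) simp_all
  moreover have "0 - complex_of_real \<alpha> * (complex_of_real (1/8 * 0) - \<sigma> * (complex_of_real (1/2) - \<sigma> * L))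
     + (complex_of_real (1/2) - \<sigma> * L) / 2 - complex_of_real (1/2)
     = (complex_of_real \<alpha> * \<sigma> / 2 + 1/4) * exp (- 2 * \<sigma>) - 1/2"
    using alg4[OF sn, of "complex_of_real \<alpha>" "exp (- 2 * \<sigma>)"] unfolding L_def by simp
  ultimately show "((\<lambda>\<beta>. FCJ \<alpha> \<beta> \<sigma>) \<longlongrightarrow>
            (complex_of_real \<alpha> * \<sigma> / 2 + 1/4) * exp (- 2 * \<sigma>) - 1/2) (at_right 0)"
    using tendsto_cong[OF ev] by simp
next
  show "((complex_of_real \<alpha> * \<sigma> / 2 + 1/4) * exp (- 2 * \<sigma>) - 1/2 = 0
           \<longleftrightarrow> exp (2 * \<sigma>) = complex_of_real \<alpha> * \<sigma> + 1/2)"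
    by (rule iff_part)
qed


end
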